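(* Let $\mathcal{H}$ be a CNET for a set $\mathcal{T}$ of rooted binary phylogenetic $X$-trees with hybridization number $k$ and deletion AAF $F$. Then for every $T\in\mathcal{T}$, $|I(T)|\le k-1$. Consequently, if $|\mathcal{T}|=3$ then $|I|\le 3(k-1)$, where $I=\bigcup_{T\in\mathcal{T}}I(T)$.
   Context: Trees: a rooted binary phylogenetic $X$-tree has leaves bijectively labelled by $X$, a root of indegree $0$ and outdegree $1$ (regarded as a leaf labelled $\rho$), and all other non-leaf nodes of indegree $1$ and outdegree $2$. A CNET for $\mathcal{T}$ is a pair $(H,\mathcal{E})$ where $H$ is a DAG (sources are roots, each with one child; sinks are leaves, bijectively labelled by $X$), $\mathcal{E}=\{H(T):T\in\mathcal{T}\}$ with each $H(T)\subseteq H$ an image of $T$ (i.e. $T$ is obtained from $H(T)$ by suppressing degree-2 nodes) containing an edge incident to a root, every edge of $H$ lies in some $H(T)$, every non-leaf non-root node has exactly two children, and for every such node some $H(T)$ contains both its child edges. Its hybridization number is $\sum_v(d^-(v)-1)$ over nodes with indegree $d^-(v)\ge2$. Its induced hybridization network is obtained by splitting nodes that are both reticulations and split nodes into a reticulation above a split node, refining multi-parent reticulations into chains of binary reticulations, joining multiple roots into a single root via new edges, and inserting a reticulation above each leaf with several parents; the deletion AAF of the CNET is the partition of the leaf labels (including $\rho$) induced by the connected components containing labelled leaves after deleting all edges entering reticulations of the induced network. For $T\in\mathcal{T}$, $I(T)$ is the set of nodes of $T$ that lie on no path of $T$ (ignoring edge directions) between two leaves $x,y$ belonging to the same component of $F$,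 the root $\rho$ being counted as a leaf. *)

theory Defs
  imports Main
begin

definition indeg :: "('v \<times> 'v) set \<Rightarrow> 'v \<Rightarrow> nat" where
  "indeg E v = card {u. (u, v) \<in> E}"

definition outdeg :: "('v \<times> 'v) set \<Rightarrow> 'v \<Rightarrow> nat" where
  "outdeg E v = card {w. (v, w) \<in> E}"

definition dpath :: "('v \<times> 'v) set \<Rightarrow> 'v list \<Rightarrow> 'v \<Rightarrow> 'v \<Rightarrow> bool" where
  "dpath E p u v \<longleftrightarrow> length p \<ge> 2 \<and> hd p = u \<and> last p = v \<and> distinct p \<and>
     (\<forall>i. Suc i < length p \<longrightarrow> (p ! i, p ! Suc i) \<in> E)"

definition path_edges :: "'v list \<Rightarrow> ('v \<times> 'v) set" where
  "path_edges p = {(p ! i, p ! Suc i) | i. Suc i < length p}"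

definition interior :: "'v list \<Rightarrow> 'v set" where
  "interior p = set (butlast (tl p))"

definition upath :: "('v \<times> 'v) set \<Rightarrow> 'v list \<Rightarrow> 'v \<Rightarrow> 'v \<Rightarrow> bool" where
  "upath E p u v \<longleftrightarrow> p \<noteq> [] \<and> hd p = u \<and> last p = v \<and> distinct p \<and>
     (\<forall>i. Suc i < length p \<longrightarrow> (p ! i, p ! Suc i) \<in> E \<or> (p ! Suc i, p ! i) \<in> E)"

type_synonym ('n, 'x) xtree = "'n set \<times> ('n \<times> 'n) set \<times> ('n \<Rightarrow> 'x)"

definition rbp_tree :: "'x set \<Rightarrow> ('n, 'x) xtree \<Rightarrow> bool" where
  "rbp_tree X T \<longleftrightarrow> (case T of (VT, ET, lT) \<Rightarrow>
     finite VT \<and> ET \<subseteq> VT \<times> VT \<and> acyclic ET \<and>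
     (\<exists>!r. r \<in> VT \<and> indeg ET r = 0) \<and>
     (\<forall>r\<in>VT. indeg ET r = 0 \<longrightarrow> outdeg ET r = 1 \<and> (\<forall>v\<in>VT. (r, v) \<in> ET\<^sup>*)) \<and>
     (\<forall>v\<in>VT. indeg ET v \<noteq> 0 \<longrightarrow> indeg ET v = 1 \<and> (outdeg ET v = 0 \<or> outdeg ET v = 2)) \<and>
     bij_betw lT {v \<in> VT. outdeg ET v = 0} X)"

text \<open>S = (VS, ES) is an image of T in the DAG with edges E and leaf labelling lab:
  S is a subdivision of T, i.e. T is obtained from S by suppressing its nodes of
  indegree 1 and outdegree 1, leaf labels being preserved.\<close>
definition is_image ::
  "('v \<Rightarrow> 'x) \<Rightarrow> ('v \<times> 'v) set \<Rightarrow> ('n, 'x) xtree \<Rightarrow> 'v set \<times> ('v \<times> 'v) set \<Rightarrow> bool" where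
  "is_image lab E T S \<longleftrightarrow> (case T of (VT, ET, lT) \<Rightarrow> case S of (VS, ES) \<Rightarrow>
     (\<exists>(\<phi> :: 'n \<Rightarrow> 'v) (P :: 'n \<times> 'n \<Rightarrow> 'v list).
        inj_on \<phi> VT \<and>
        (\<forall>v\<in>VT. outdeg ET v = 0 \<longrightarrow> outdeg E (\<phi> v) = 0 \<and> lab (\<phi> v) = lT v) \<and>
        (\<forall>e\<in>ET. dpath ES (P e) (\<phi> (fst e)) (\<phi> (snd e))) \<and>
        (\<forall>e\<in>ET. \<forall>e'\<in>ET. e \<noteq> e' \<longrightarrow> interior (P e) \<inter> set (P e') = {}) \<and>
        (\<forall>e\<in>ET. interior (P e) \<inter> \<phi> ` VT = {}) \<and>
        ES = (\<Union>e\<in>ET. path_edges (P e)) \<and>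
        VS = \<phi> ` VT \<union> (\<Union>e\<in>ET. set (P e))))"

text \<open>(H, \<E>) with H = (V, E, lab) and \<E> = {emb T | T \<in> TT}.\<close>
definition cnet ::
  "'x set \<Rightarrow> ('n, 'x) xtree set \<Rightarrow> 'v set \<Rightarrow> ('v \<times> 'v) set \<Rightarrow> ('v \<Rightarrow> 'x)
     \<Rightarrow> (('n, 'x) xtree \<Rightarrow> 'v set \<times> ('v \<times> 'v) set) \<Rightarrow> bool" where
  "cnet X TT V E lab emb \<longleftrightarrow>
     finite V \<and> E \<subseteq> V \<times> V \<and> acyclic E \<and>
     (\<forall>v\<in>V. indeg E v = 0 \<longrightarrow> outdeg E v = 1) \<and>
     bij_betw lab {v \<in> V. outdeg E v = 0} X \<and>
     (\<forall>v\<in>V. indeg E v \<noteq> 0 \<and> outdeg E v \<noteq> 0 \<longrightarrow> outdeg E v = 2) \<and>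
     (\<forall>T\<in>TT. fst (emb T) \<subseteq> V \<and> snd (emb T) \<subseteq> E \<and> is_image lab E T (emb T) \<and>
        (\<exists>u w. (u, w) \<in> snd (emb T) \<and> indeg E u = 0)) \<and>
     (\<forall>e\<in>E. \<exists>T\<in>TT. e \<in> snd (emb T)) \<and>
     (\<forall>v\<in>V. indeg E v \<noteq> 0 \<and> outdeg E v \<noteq> 0 \<longrightarrow>
        (\<exists>T\<in>TT. {e \<in> E. fst e = v} \<subseteq> snd (emb T)))"

definition hyb_number :: "'v set \<Rightarrow> ('v \<times> 'v) set \<Rightarrow> nat" where
  "hyb_number V E = (\<Sum>v\<in>{v \<in> V. indeg E v \<ge> 2}. indeg E v - 1)"

text \<open>The graph obtained from the induced hybridization network by deleting all edges
  entering reticulations, up to nodes irrelevant for connectivity between labelled leaves: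
  edges of H entering a node of indegree \<ge> 2 are deleted; the node None plays the role of
  the single root \<rho> of the induced network, which is joined (via tree edges) to all roots of H.\<close>
definition aaf_graph :: "'v set \<Rightarrow> ('v \<times> 'v) set \<Rightarrow> ('v option \<times> 'v option) set" where
  "aaf_graph V E =
     {(Some u, Some w) | u w. (u, w) \<in> E \<and> indeg E w < 2} \<union>
     {(None, Some r) | r. r \<in> V \<and> indeg E r = 0}"

definition aaf_conn :: "'v set \<Rightarrow> ('v \<times> 'v) set \<Rightarrow> 'v option \<Rightarrow> 'v option \<Rightarrow> bool" where
  "aaf_conn V E a b \<longleftrightarrow> (a, b) \<in> (aaf_graph V E \<union> (aaf_graph V E)\<inverse>)\<^sup>*"

definition label_node :: "'x \<Rightarrow> 'v set \<Rightarrow> ('v \<times> 'v) set \<Rightarrow> ('v \<Rightarrow> 'x) \<Rightarrow> 'x \<Rightarrow> 'v option" where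
  "label_node rho V E lab x =
     (if x = rho then None else Some (THE v. v \<in> V \<and> outdeg E v = 0 \<and> lab v = x))"

definition deletion_aaf ::
  "'x set \<Rightarrow> 'x \<Rightarrow> 'v set \<Rightarrow> ('v \<times> 'v) set \<Rightarrow> ('v \<Rightarrow> 'x) \<Rightarrow> 'x set set" where
  "deletion_aaf X rho V E lab =
     {{y \<in> insert rho X. aaf_conn V E (label_node rho V E lab x) (label_node rho V E lab y)}
       | x. x \<in> insert rho X}"

text \<open>Node v of T carries label x (the root counting as a leaf labelled \<rho>).\<close>
definition tlabelled :: "'x \<Rightarrow> ('n, 'x) xtree \<Rightarrow> 'n \<Rightarrow> 'x \<Rightarrow> bool" where
  "tlabelled rho T v x \<longleftrightarrow> (case T of (VT, ET, lT) \<Rightarrow>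
     v \<in> VT \<and> ((indeg ET v = 0 \<and> x = rho) \<or> (outdeg ET v = 0 \<and> lT v = x)))"

definition I_set :: "'x \<Rightarrow> 'x set set \<Rightarrow> ('n, 'x) xtree \<Rightarrow> 'n set" where
  "I_set rho F T = (case T of (VT, ET, lT) \<Rightarrow>
     {w \<in> VT. \<not> (\<exists>u v x y p. tlabelled rho T u x \<and> tlabelled rho T v y \<and>
                    (\<exists>B\<in>F. x \<in> B \<and> y \<in> B) \<and> upath ET p u v \<and> w \<in> set p)})"

end

theory Submission imports Defs begin

lemma succ_nth: "(\<forall>i. Suc i < length p \<longrightarrow> P (p!i) (p!Suc i)) \<longleftrightarrow> successively P p"
proof (induction p)
  case Nil then show ?case by simp
next
  case (Cons a p)
  show ?case
  proof (cases p)
    case Nil then show ?thesis by simp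
  next
    case (Cons b q)
    have "(\<forall>i. Suc i < length (a # p) \<longrightarrow> P ((a # p) ! i) ((a # p) ! Suc i)) \<longleftrightarrow>
          P a b \<and> (\<forall>i. Suc i < length p \<longrightarrow> P (p!i) (p!Suc i))"
      using Cons by (auto simp: nth_Cons split: nat.splits)
    then show ?thesis using Cons \<open>_ \<longleftrightarrow> successively P p\<close> by simp
  qed
qed

lemma upath_iff: "upath E p u v \<longleftrightarrow> p \<noteq> [] \<and> hd p = u \<and> last p = v \<and> distinct p \<and>
   successively (\<lambda>a b. (a,b)\<in>E \<or> (b,a)\<in>E) p"
  unfolding upath_def using succ_nth[of p "\<lambda>a b. (a,b)\<in>E \<or> (b,a)\<in>E"] by simp

definition dp :: "('v \<times> 'v) set \<Rightarrow> 'v list \<Rightarrow> 'v \<Rightarrow> 'v \<Rightarrow> bool" where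
  "dp E p u v \<longleftrightarrow> p \<noteq> [] \<and> hd p = u \<and> last p = v \<and> distinct p \<and> successively (\<lambda>a b. (a,b)\<in>E) p"

lemma dp_upath: "dp E p u v \<Longrightarrow> upath E p u v"
  unfolding upath_iff dp_def by (auto elim: successively_mono)

lemma dp_exists:
  assumes "acyclic E" "(u,v) \<in> E\<^sup>*"
  shows "\<exists>p. dp E p u v \<and> (\<forall>x\<in>set p. (u,x)\<in>E\<^sup>* \<and> (x,v)\<in>E\<^sup>*)"
  using assms(2)
proof (induction rule: rtrancl_induct)
  case base
  then show ?case by (auto simp: dp_def)
next
  case (step y z)
  then obtain p where p: "dp E p u y" "\<forall>x\<in>set p. (u,x)\<in>E\<^sup>* \<and> (x,y)\<in>E\<^sup>*" by blast
  have "z \<notin> set p"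
  proof
    assume "z \<in> set p"
    then have "(z,y) \<in> E\<^sup>*" using p by blast
    then have "(z,z) \<in> E\<^sup>+" using step(2) by (meson rtrancl_into_trancl1)
    then show False using assms(1) by (simp add: acyclic_def)
  qed
  then have "dp E (p @ [z]) u z" using p step by (auto simp: dp_def successively_append_iff)
  moreover have "\<forall>x\<in>set (p@[z]). (u,x)\<in>E\<^sup>* \<and> (x,z)\<in>E\<^sup>*"
    using p step by (auto intro: rtrancl_into_rtrancl)
  ultimately show ?case by blast
qed

lemma dp_via:
  assumes "acyclic E" "(u,y) \<in> E\<^sup>*" "(y,v) \<in> E\<^sup>*"
  shows "\<exists>p. dp E p u v \<and> y \<in> set p \<and> (\<forall>x\<in>set p. (u,x)\<in>E\<^sup>* \<and> (x,v)\<in>E\<^sup>*)"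
proof -
  obtain p1 where p1: "dp E p1 u y" "\<forall>x\<in>set p1. (u,x)\<in>E\<^sup>* \<and> (x,y)\<in>E\<^sup>*"
    using dp_exists[OF assms(1,2)] by blast
  obtain p2 where p2: "dp E p2 y v" "\<forall>x\<in>set p2. (y,x)\<in>E\<^sup>* \<and> (x,v)\<in>E\<^sup>*"
    using dp_exists[OF assms(1,3)] by blast
  obtain q1 where e1: "p1 = q1 @ [y]" using p1 unfolding dp_def by (metis append_butlast_last_id)
  obtain q2 where e2: "p2 = y # q2" using p2 unfolding dp_def by (metis list.collapse)
  have d1: "distinct (q1 @ [y])" "successively (\<lambda>a b. (a,b)\<in>E) (q1 @ [y])" "hd (q1 @ [y]) = u"
    "\<forall>x\<in>set q1. (u,x)\<in>E\<^sup>* \<and> (x,y)\<in>E\<^sup>*"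
    using p1 unfolding dp_def e1 by auto
  have d2: "distinct (y # q2)" "successively (\<lambda>a b. (a,b)\<in>E) (y # q2)" "last (y # q2) = v"
    "\<forall>x\<in>set (y # q2). (y,x)\<in>E\<^sup>* \<and> (x,v)\<in>E\<^sup>*"
    using p2 unfolding dp_def e2 by auto
  define p where "p = q1 @ y # q2"
  have disj: "set q1 \<inter> set (y # q2) = {}"
  proof (rule ccontr)
    assume "set q1 \<inter> set (y # q2) \<noteq> {}"
    then obtain x where x: "x \<in> set q1" "x \<in> set (y # q2)" by blast
    have "x \<noteq> y" using x(1) d1(1) by auto
    have "(x,y) \<in> E\<^sup>*" using d1(4) x(1) by blast
    then have "(x,y) \<in> E\<^sup>+" using \<open>x \<noteq> y\<close> by (simp add: rtrancl_eq_or_trancl)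
    moreover have "(y,x) \<in> E\<^sup>*" using d2(4) x(2) by blast
    ultimately have "(x,x) \<in> E\<^sup>+" by (rule trancl_rtrancl_trancl)
    then show False using assms(1) by (simp add: acyclic_def)
  qed
  have "successively (\<lambda>a b. (a,b)\<in>E) p"
    using d1(2) d2(2) unfolding p_def successively_append_iff by (cases q1) (auto simp: successively_append_iff)
  moreover have "distinct p" using d1(1) d2(1) disj unfolding p_def by auto
  moreover have "hd p = u" using d1(3) unfolding p_def by (cases q1) auto
  moreover have "last p = v" using d2(3) unfolding p_def by simp
  ultimately have "dp E p u v" unfolding dp_def p_def by simp
  moreover have "y \<in> set p" unfolding p_def by simp
  moreover have "\<forall>x\<in>set p. (u,x)\<in>E\<^sup>* \<and> (x,v)\<in>E\<^sup>*"
  proof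
    fix x assume "x \<in> set p"
    then have "x \<in> set q1 \<or> x \<in> set (y # q2)" unfolding p_def by auto
    then show "(u,x)\<in>E\<^sup>* \<and> (x,v)\<in>E\<^sup>*"
    proof
      assume "x \<in> set q1" then show ?thesis using d1(4) assms(3) by (meson rtrancl_trans)
    next
      assume "x \<in> set (y # q2)" then show ?thesis using d2(4) assms(2) by (meson rtrancl_trans)
    qed
  qed
  ultimately show ?thesis by blast
qed


locale rtree =
  fixes X :: "'x set" and VT :: "'n set" and ET :: "('n \<times> 'n) set" and lT :: "'n \<Rightarrow> 'x"
  assumes rbp: "rbp_tree X (VT, ET, lT)"
begin

lemma finV: "finite VT" and subE: "ET \<subseteq> VT \<times> VT" and acyc: "acyclic ET"
  and bij: "bij_betw lT {v \<in> VT. outdeg ET v = 0} X"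
  and deg: "\<And>v. v \<in> VT \<Longrightarrow> indeg ET v \<noteq> 0 \<Longrightarrow> indeg ET v = 1 \<and> (outdeg ET v = 0 \<or> outdeg ET v = 2)"
  and rootex: "\<exists>!r. r \<in> VT \<and> indeg ET r = 0"
  and rootp: "\<And>r. r \<in> VT \<Longrightarrow> indeg ET r = 0 \<Longrightarrow> outdeg ET r = 1 \<and> (\<forall>v\<in>VT. (r, v) \<in> ET\<^sup>*)"
  using rbp unfolding rbp_tree_def by auto

lemma finE: "finite ET" using finV subE by (meson finite_SigmaI finite_subset)

lemma fin_pars: "finite {u. (u,v) \<in> ET}"
proof -
  have "{u. (u,v) \<in> ET} \<subseteq> fst ` ET" by force
  then show ?thesis using finE finite_subset by blast
qed
lemma fin_ch: "finite {u. (v,u) \<in> ET}"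
proof -
  have "{u. (v,u) \<in> ET} \<subseteq> snd ` ET" by force
  then show ?thesis using finE finite_subset by blast
qed

lemma uniq_par: assumes "(u,v) \<in> ET" "(u',v) \<in> ET" shows "u = u'"
proof -
  have "v \<in> VT" using assms subE by auto
  have "indeg ET v \<noteq> 0" using assms fin_pars unfolding indeg_def by auto
  then have "card {u. (u,v) \<in> ET} \<le> Suc 0" using deg[OF \<open>v \<in> VT\<close>] unfolding indeg_def by simp
  then show ?thesis using assms fin_pars card_le_Suc0_iff_eq by blast
qed

lemma outdeg0_iff: "outdeg ET v = 0 \<longleftrightarrow> (\<forall>c. (v,c) \<notin> ET)"
  using fin_ch unfolding outdeg_def by auto

definition rt where "rt = (THE r. r \<in> VT \<and> indeg ET r = 0)"

lemma rt: "rt \<in> VT" "indeg ET rt = 0" "\<And>v. v \<in> VT \<Longrightarrow> (rt, v) \<in> ET\<^sup>*"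
  "\<And>v. v \<in> VT \<Longrightarrow> indeg ET v = 0 \<Longrightarrow> v = rt"
proof -
  have "rt \<in> VT \<and> indeg ET rt = 0" unfolding rt_def using theI'[OF rootex] .
  then show "rt \<in> VT" "indeg ET rt = 0" "\<And>v. v \<in> VT \<Longrightarrow> (rt, v) \<in> ET\<^sup>*" 
    "\<And>v. v \<in> VT \<Longrightarrow> indeg ET v = 0 \<Longrightarrow> v = rt" using rootp rootex by blast+
qed

lemma comp: assumes "(a,c) \<in> ET\<^sup>*" "(b,c) \<in> ET\<^sup>*" shows "(a,b) \<in> ET\<^sup>* \<or> (b,a) \<in> ET\<^sup>*"
  using assms(2,1)
proof (induction rule: rtrancl_induct)
  case base then show ?case by simp
next
  case (step y z)
  show ?case
  proof (cases "a = z")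
    case True then show ?thesis using step by (meson rtrancl.rtrancl_into_rtrancl)
  next
    case False
    then have "(a,z) \<in> ET\<^sup>+" using step(4) by (simp add: rtrancl_eq_or_trancl)
    then obtain y' where "(a,y') \<in> ET\<^sup>*" "(y',z) \<in> ET" by (meson tranclD2)
    then have "y' = y" using uniq_par step(2) by blast
    then show ?thesis using step \<open>(a,y') \<in> ET\<^sup>*\<close> by blast
  qed
qed

lemma no_cycle: "(x,x) \<notin> ET\<^sup>+" using acyc by (simp add: acyclic_def)

lemma no_common:
  assumes "(z,d1) \<in> ET" "(z,d2) \<in> ET" "d1 \<noteq> d2" "(d1,c) \<in> ET\<^sup>*" "(d2,c) \<in> ET\<^sup>*"
  shows False
proof -
  have *: False if "(z,a) \<in> ET" "(z,b) \<in> ET" "a \<noteq> b" "(a,b) \<in> ET\<^sup>*" for a b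
  proof -
    have "(a,b) \<in> ET\<^sup>+" using that by (simp add: rtrancl_eq_or_trancl)
    then obtain y where "(a,y) \<in> ET\<^sup>*" "(y,b) \<in> ET" by (meson tranclD2)
    then have "y = z" using uniq_par that by blast
    then have "(z,z) \<in> ET\<^sup>+" using that(1) \<open>(a,y) \<in> ET\<^sup>*\<close> by (meson rtrancl_into_trancl2)
    then show False using no_cycle by blast
  qed
  show False using comp[OF assms(4,5)] *[OF assms(1-3)] *[OF assms(2,1)] assms(3) by metis
qed

lemma child_not_anc: assumes "(z,d) \<in> ET" "(d,z) \<in> ET\<^sup>*" shows False
  using assms no_cycle by (meson rtrancl_into_trancl2)

lemma path_split:
  assumes "(z,d1) \<in> ET" "(z,d2) \<in> ET" "d1 \<noteq> d2" "(d1,y) \<in> ET\<^sup>*" "(y,a) \<in> ET\<^sup>*" "(d2,b) \<in> ET\<^sup>*"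
  shows "\<exists>p. upath ET p a b \<and> y \<in> set p \<and> z \<in> set p"
proof -
  obtain p1 where p1: "dp ET p1 d1 a" "y \<in> set p1" "\<forall>x\<in>set p1. (d1,x)\<in>ET\<^sup>* \<and> (x,a)\<in>ET\<^sup>*"
    using dp_via[OF acyc assms(4,5)] by blast
  obtain p2 where p2: "dp ET p2 d2 b" "\<forall>x\<in>set p2. (d2,x)\<in>ET\<^sup>* \<and> (x,b)\<in>ET\<^sup>*"
    using dp_exists[OF acyc assms(6)] by blast
  define p where "p = rev p1 @ z # p2"
  have "z \<notin> set p1" using p1 child_not_anc assms(1) by blast
  moreover have "z \<notin> set p2" using p2 child_not_anc assms(2) by blast
  moreover have "set p1 \<inter> set p2 = {}" using p1 p2 no_common[OF assms(1-3)] by blast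
  ultimately have "distinct p" using p1 p2 unfolding p_def dp_def by auto
  moreover have "hd p = a" using p1 unfolding p_def dp_def by (simp add: hd_rev)
  moreover have "last p = b" using p2 unfolding p_def dp_def by simp
  moreover have "successively (\<lambda>a b. (a,b)\<in>ET \<or> (b,a)\<in>ET) p"
  proof -
    have s1: "successively (\<lambda>a b. (a,b)\<in>ET \<or> (b,a)\<in>ET) (rev p1)"
      using p1 unfolding dp_def by (auto elim: successively_mono)
    have s2: "successively (\<lambda>a b. (a,b)\<in>ET \<or> (b,a)\<in>ET) (z # p2)"
      using p2 assms(2) unfolding dp_def by (cases p2) (auto elim: successively_mono)
    have "last (rev p1) = d1" using p1 unfolding dp_def by (simp add: last_rev)
    then show ?thesis using s1 s2 assms(1) unfolding p_def successively_append_iff by auto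
  qed
  ultimately have "upath ET p a b" unfolding upath_iff p_def by simp
  moreover have "y \<in> set p" "z \<in> set p" using p1 unfolding p_def by auto
  ultimately show ?thesis by blast
qed

lemma path_root:
  assumes "(w,a) \<in> ET\<^sup>*" "w \<in> VT"
  shows "\<exists>p. upath ET p rt a \<and> w \<in> set p"
proof -
  obtain p where "dp ET p rt a" "w \<in> set p" using dp_via[OF acyc rt(3)[OF assms(2)] assms(1)] by blast
  then show ?thesis using dp_upath[of ET p rt a] by blast
qed

lemma leaf_below: assumes "v \<in> VT" shows "\<exists>a. a \<in> VT \<and> outdeg ET a = 0 \<and> (v,a) \<in> ET\<^sup>*"
proof -
  have wf: "wf (ET\<inverse>)" by (rule finite_acyclic_wf_converse[OF finE acyc])
  show ?thesis using assms
  proof (induction v rule: wf_induct_rule[OF wf])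
    case (1 v)
    show ?case
    proof (cases "outdeg ET v = 0")
      case True then show ?thesis using 1 by blast
    next
      case False
      then obtain c where "(v,c) \<in> ET" using outdeg0_iff by metis
      then have "c \<in> VT" "(c,v) \<in> ET\<inverse>" using subE by auto
      then show ?thesis using 1 \<open>(v,c) \<in> ET\<close> by (meson converse_rtrancl_into_rtrancl)
    qed
  qed
qed

end

context rtree begin

definition lvs where "lvs v = {a \<in> VT. outdeg ET a = 0 \<and> (v,a) \<in> ET\<^sup>*}"

lemma leaf_lab: "a \<in> VT \<Longrightarrow> outdeg ET a = 0 \<Longrightarrow> lT a \<in> X"
  using bij by (auto dest: bij_betwE)

lemma lvs_mono: "(u,v) \<in> ET\<^sup>* \<Longrightarrow> lvs v \<subseteq> lvs u"
  unfolding lvs_def by (auto intro: rtrancl_trans)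

lemma lvs_split:
  assumes "{c. (w,c) \<in> ET} = {d1,d2}"
  shows "lvs w = lvs d1 \<union> lvs d2"
proof
  have "(w,d1) \<in> ET" "(w,d2) \<in> ET" using assms by auto
  show "lvs w \<subseteq> lvs d1 \<union> lvs d2"
  proof
    fix a assume a: "a \<in> lvs w"
    then have "(w,a) \<in> ET\<^sup>*" "outdeg ET a = 0" "a \<in> VT" unfolding lvs_def by auto
    then show "a \<in> lvs d1 \<union> lvs d2"
    proof (cases rule: converse_rtranclE)
      case base
      then show ?thesis using \<open>outdeg ET a = 0\<close> \<open>(w,d1) \<in> ET\<close> outdeg0_iff by blast
    next
      case (step c)
      then have "c \<in> {d1,d2}" using assms by blast
      then show ?thesis using step \<open>outdeg ET a = 0\<close> \<open>a \<in> VT\<close> unfolding lvs_def by auto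
    qed
  qed
  show "lvs d1 \<union> lvs d2 \<subseteq> lvs w"
    using lvs_mono \<open>(w,d1) \<in> ET\<close> \<open>(w,d2) \<in> ET\<close> by blast
qed

lemma lvs_fin: "finite (lvs v)" unfolding lvs_def using finV by auto

lemma lvs_ne: "v \<in> VT \<Longrightarrow> lvs v \<noteq> {}" unfolding lvs_def using leaf_below by blast

end

locale rtree_col = rtree X VT ET lT
  for X :: "'x set" and VT :: "'n set" and ET and lT :: "'n \<Rightarrow> 'x" +
  fixes rho :: 'x and F :: "'x set set" and col :: "'x \<Rightarrow> nat"
  assumes same: "\<And>x y. x \<in> insert rho X \<Longrightarrow> y \<in> insert rho X \<Longrightarrow> col x = col y \<Longrightarrow> \<exists>B\<in>F. x\<in>B \<and> y\<in>B"
begin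

definition "II = I_set rho F (VT,ET,lT)"
definition "colset v = col ` lT ` lvs v"
definition "m v = Min (colset v)"
definition "f w = Max (m ` {c. (w,c) \<in> ET})"

lemma II_sub: "II \<subseteq> VT" unfolding II_def I_set_def by auto

lemma noI:
  assumes "w \<in> II" "tlabelled rho (VT,ET,lT) u x" "tlabelled rho (VT,ET,lT) v y"
    "x \<in> insert rho X" "y \<in> insert rho X" "col x = col y" "upath ET p u v" "w \<in> set p"
  shows False
proof -
  obtain B where "B \<in> F" "x \<in> B" "y \<in> B" using same assms(4-6) by blast
  then have ex: "\<exists>u v x y p. tlabelled rho (VT,ET,lT) u x \<and> tlabelled rho (VT,ET,lT) v y \<and>
      (\<exists>B\<in>F. x \<in> B \<and> y \<in> B) \<and> upath ET p u v \<and> w \<in> set p"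
    using assms(2,3,7,8) by blast
  have "w \<in> {w \<in> VT. \<not> (\<exists>u v x y p. tlabelled rho (VT,ET,lT) u x \<and> tlabelled rho (VT,ET,lT) v y \<and>
      (\<exists>B\<in>F. x \<in> B \<and> y \<in> B) \<and> upath ET p u v \<and> w \<in> set p)}"
    using assms(1) unfolding II_def I_set_def by (simp only: prod.case)
  then show False using ex by blast
qed

lemma tl_root: "tlabelled rho (VT,ET,lT) rt rho" unfolding tlabelled_def using rt(1,2) by simp
lemma tl_leaf: "a \<in> VT \<Longrightarrow> outdeg ET a = 0 \<Longrightarrow> tlabelled rho (VT,ET,lT) a (lT a)"
  unfolding tlabelled_def by simp
lemma up1: "upath ET [v] v v" unfolding upath_def by simp

lemma internal:
  assumes "w \<in> II"
  shows "w \<in> VT \<and> (\<exists>d1 d2. d1 \<noteq> d2 \<and> {c. (w,c) \<in> ET} = {d1,d2})"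
proof -
  have w: "w \<in> VT" using assms II_sub by auto
  have "indeg ET w \<noteq> 0"
  proof
    assume "indeg ET w = 0"
    then have "w = rt" using rt(4) w by blast
    then show False using noI[OF assms tl_root tl_root _ _ _ up1] by simp
  qed
  then have "outdeg ET w = 0 \<or> outdeg ET w = 2" using deg w by blast
  moreover have "outdeg ET w \<noteq> 0"
  proof
    assume "outdeg ET w = 0"
    then show False using noI[OF assms tl_leaf tl_leaf _ _ _ up1, of w] w leaf_lab by simp
  qed
  ultimately have "card {c. (w,c) \<in> ET} = 2" unfolding outdeg_def by simp
  then show ?thesis using w by (auto simp: card_2_iff)
qed

lemma colset_fin: "finite (colset v)" unfolding colset_def using lvs_fin by simp
lemma colset_ne: "v \<in> VT \<Longrightarrow> colset v \<noteq> {}" unfolding colset_def using lvs_ne by simp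
lemma colset_sub: "colset v \<subseteq> col ` X"
  unfolding colset_def lvs_def using leaf_lab by auto
lemma colset_mono: "(u,v) \<in> ET\<^sup>* \<Longrightarrow> colset v \<subseteq> colset u"
  unfolding colset_def using lvs_mono by blast

lemma same_col_leaves:
  assumes "\<gamma> \<in> colset u" "\<gamma> \<in> colset v"
  obtains a b where "a \<in> lvs u" "b \<in> lvs v" "col (lT a) = col (lT b)"
  using assms unfolding colset_def by auto

lemma lvsD: "a \<in> lvs v \<Longrightarrow> a \<in> VT \<and> outdeg ET a = 0 \<and> (v,a) \<in> ET\<^sup>*"
  unfolding lvs_def by auto

lemma noI_leaves:
  assumes "w \<in> II" "a \<in> VT" "outdeg ET a = 0" "b \<in> VT" "outdeg ET b = 0"
    "col (lT a) = col (lT b)" "upath ET p a b" "w \<in> set p"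
  shows False
proof -
  have xa: "lT a \<in> insert rho X" using leaf_lab[OF assms(2,3)] by simp
  have xb: "lT b \<in> insert rho X" using leaf_lab[OF assms(4,5)] by simp
  show False by (rule noI[OF assms(1) tl_leaf[OF assms(2,3)] tl_leaf[OF assms(4,5)] xa xb assms(6-8)])
qed

lemma disj_children:
  assumes "w \<in> II" "(w,d1) \<in> ET" "(w,d2) \<in> ET" "d1 \<noteq> d2"
  shows "colset d1 \<inter> colset d2 = {}"
proof (rule ccontr)
  assume "colset d1 \<inter> colset d2 \<noteq> {}"
  then obtain a b where ab: "a \<in> lvs d1" "b \<in> lvs d2" "col (lT a) = col (lT b)"
    using same_col_leaves by blast
  have ra: "(d1,a) \<in> ET\<^sup>*" using lvsD[OF ab(1)] by simp
  have rb: "(d2,b) \<in> ET\<^sup>*" using lvsD[OF ab(2)] by simp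
  obtain p where p: "upath ET p a b" "w \<in> set p"
    using path_split[OF assms(2-4) rtrancl_refl ra rb] by blast
  have A: "a \<in> VT" "outdeg ET a = 0" using lvsD[OF ab(1)] by auto
  have B: "b \<in> VT" "outdeg ET b = 0" using lvsD[OF ab(2)] by auto
  show False by (rule noI_leaves[OF assms(1) A B ab(3) p])
qed

lemma no_rho:
  assumes "w \<in> II" shows "col rho \<notin> colset w"
proof
  assume "col rho \<in> colset w"
  then obtain a where a: "a \<in> lvs w" "col (lT a) = col rho" unfolding colset_def by auto
  obtain p where p: "upath ET p rt a" "w \<in> set p"
  proof -
    have "(w,a) \<in> ET\<^sup>*" "w \<in> VT" using lvsD[OF a(1)] II_sub assms by auto
    then show ?thesis using path_root that by blast
  qed
  have A: "a \<in> VT" "outdeg ET a = 0" using lvsD[OF a(1)] by auto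
  have xa: "lT a \<in> insert rho X" using leaf_lab[OF A] by simp
  show False by (rule noI[OF assms tl_root tl_leaf[OF A] _ xa a(2)[symmetric] p]) simp
qed

lemma incomp:
  assumes "w \<in> II" "w' \<in> VT" "(w,w') \<notin> ET\<^sup>*" "(w',w) \<notin> ET\<^sup>*"
  shows "colset w \<inter> colset w' = {}"
proof (rule ccontr)
  assume "colset w \<inter> colset w' \<noteq> {}"
  then obtain a b where ab: "a \<in> lvs w" "b \<in> lvs w'" "col (lT a) = col (lT b)"
    using same_col_leaves by blast
  have wV: "w \<in> VT" using assms II_sub by auto
  define A where "A = {z. (z,w) \<in> ET\<^sup>* \<and> (z,w') \<in> ET\<^sup>*}"
  have "rt \<in> A" unfolding A_def using rt(3) wV assms(2) by blast
  have wf: "wf (ET\<inverse>)" by (rule finite_acyclic_wf_converse[OF finE acyc])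
  obtain z where z: "z \<in> A" "\<And>y. (y,z) \<in> ET\<inverse> \<Longrightarrow> y \<notin> A"
    using wfE_min[OF wf \<open>rt \<in> A\<close>] by blast
  have "z \<noteq> w" using z(1) assms(3) unfolding A_def by blast
  then have "(z,w) \<in> ET\<^sup>+" using z(1) unfolding A_def by (simp add: rtrancl_eq_or_trancl)
  then obtain d1 where d1: "(z,d1) \<in> ET" "(d1,w) \<in> ET\<^sup>*" by (meson tranclD)
  have "z \<noteq> w'" using z(1) assms(4) unfolding A_def by blast
  then have "(z,w') \<in> ET\<^sup>+" using z(1) unfolding A_def by (simp add: rtrancl_eq_or_trancl)
  then obtain d2 where d2: "(z,d2) \<in> ET" "(d2,w') \<in> ET\<^sup>*" by (meson tranclD)
  have "d1 \<noteq> d2"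
  proof
    assume "d1 = d2"
    then have "d1 \<in> A" using d1 d2 unfolding A_def by blast
    then show False using z(2) d1(1) by blast
  qed
  have "(d2,b) \<in> ET\<^sup>*" using d2 lvsD[OF ab(2)] by (meson rtrancl_trans)
  moreover have "(w,a) \<in> ET\<^sup>*" using lvsD[OF ab(1)] by simp
  ultimately obtain p where p: "upath ET p a b" "w \<in> set p"
    using path_split[OF d1(1) d2(1) \<open>d1 \<noteq> d2\<close> d1(2)] by blast
  have A: "a \<in> VT" "outdeg ET a = 0" using lvsD[OF ab(1)] by auto
  have B: "b \<in> VT" "outdeg ET b = 0" using lvsD[OF ab(2)] by auto
  show False by (rule noI_leaves[OF assms(1) A B ab(3) p])
qed

lemma m_in: "v \<in> VT \<Longrightarrow> m v \<in> colset v"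
  unfolding m_def using colset_fin colset_ne Min_in by blast

lemma f_props:
  assumes "w \<in> II" "{c. (w,c) \<in> ET} = {d1,d2}" "d1 \<noteq> d2"
  shows "m d1 \<noteq> m d2 \<and> f w = max (m d1) (m d2) \<and> Min (colset w) = min (m d1) (m d2)"
proof -
  have e: "(w,d1) \<in> ET" "(w,d2) \<in> ET" using assms(2) by auto
  then have V: "d1 \<in> VT" "d2 \<in> VT" using subE by auto
  have 1: "m d1 \<noteq> m d2" using m_in[OF V(1)] m_in[OF V(2)] disj_children[OF assms(1) e assms(3)] by auto
  have 2: "f w = max (m d1) (m d2)" unfolding f_def assms(2) by simp
  have cw: "colset w = colset d1 \<union> colset d2"
    unfolding colset_def lvs_split[OF assms(2)] by blast
  have mu: "Min (colset d1 \<union> colset d2) = min (Min (colset d1)) (Min (colset d2))"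
    by (rule Min_Un[OF colset_fin colset_ne[OF V(1)] colset_fin colset_ne[OF V(2)]])
  have 3: "Min (colset w) = min (m d1) (m d2)"
    unfolding m_def cw mu ..
  show ?thesis using 1 2 3 by blast
qed

lemma f_in: assumes "w \<in> II" shows "f w \<in> colset w \<and> Min (colset w) < f w"
proof -
  obtain d1 d2 where d: "d1 \<noteq> d2" "{c. (w,c) \<in> ET} = {d1,d2}" using internal assms by blast
  have e: "(w,d1) \<in> ET" "(w,d2) \<in> ET" using d by auto
  then have V: "d1 \<in> VT" "d2 \<in> VT" using subE by auto
  have "m d1 \<in> colset w" "m d2 \<in> colset w" using m_in V colset_mono e by blast+
  moreover have "m d1 \<noteq> m d2 \<and> f w = max (m d1) (m d2) \<and> Min (colset w) = min (m d1) (m d2)"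
    using f_props[OF assms d(2,1)] .
  ultimately show ?thesis by (simp add: max_def min_def)
qed

lemma below:
  assumes "w \<in> II" "w' \<in> II" "(w,w') \<in> ET\<^sup>+"
  shows "f w \<noteq> f w'"
proof -
  obtain d1 d2 where d: "d1 \<noteq> d2" "{c. (w,c) \<in> ET} = {d1,d2}" using internal assms by blast
  have key: "f w \<noteq> f w'" if cc: "{c. (w,c) \<in> ET} = {c,c'}" "c \<noteq> c'" "(c,w') \<in> ET\<^sup>*" for c c'
  proof -
    have e: "(w,c) \<in> ET" "(w,c') \<in> ET" using cc(1)[unfolded set_eq_iff] by simp_all
    then have V: "c \<in> VT" "c' \<in> VT" using subE by auto
    have w'V: "w' \<in> VT" using assms II_sub by auto
    have sub: "colset w' \<subseteq> colset c" using colset_mono cc(3) by blast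
    have fw'0: "f w' \<in> colset w' \<and> Min (colset w') < f w'" by (rule f_in[OF assms(2)])
    have fw': "f w' \<in> colset c" "Min (colset w') < f w'" using fw'0 sub by blast+
    have "m c \<le> Min (colset w')" unfolding m_def
      using Min_antimono[OF sub colset_ne[OF w'V] colset_fin] .
    then have lt: "m c < f w'" using fw'(2) by linarith
    have fp: "f w = max (m c) (m c')" using f_props[OF assms(1) cc(1,2)] by blast
    show ?thesis
    proof (cases "f w = m c")
      case True then show ?thesis using lt by simp
    next
      case False
      then have "f w = m c'" using fp by (auto simp: max_def split: if_splits)
      then have "f w \<in> colset c'" using m_in V by simp
      have dj: "colset c \<inter> colset c' = {}" by (rule disj_children[OF assms(1) e cc(2)])
      show ?thesis
      proof
        assume "f w = f w'"
        then have "f w' \<in> colset c'" using \<open>f w \<in> colset c'\<close> by (simp only:)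
        then show False using fw'(1) dj by (simp add: disjoint_iff)
      qed
    qed
  qed
  obtain c where c: "(w,c) \<in> ET" "(c,w') \<in> ET\<^sup>*" using assms(3) by (meson tranclD)
  then have "c \<in> {c. (w,c) \<in> ET}" by simp
  then have "c \<in> {d1,d2}" using d(2) by (simp only:)
  then have "c = d1 \<or> c = d2" by simp
  then show ?thesis
  proof
    assume "c = d1"
    then have "(d1,w') \<in> ET\<^sup>*" using c(2) by (simp only:)
    then show ?thesis by (rule key[OF d(2) d(1)])
  next
    assume "c = d2"
    have d2: "{c. (w,c) \<in> ET} = {d2,d1}" using d(2) by (simp only: insert_commute)
    have "(d2,w') \<in> ET\<^sup>*" using c(2) \<open>c = d2\<close> by (simp only:)
    then show ?thesis by (rule key[OF d2 d(1)[symmetric]])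
  qed
qed

lemma f_inj: "inj_on f II"
proof
  fix w w' assume a: "w \<in> II" "w' \<in> II" "f w = f w'"
  show "w = w'"
  proof (rule ccontr)
    assume ne: "w \<noteq> w'"
    show False
    proof (cases "(w,w') \<in> ET\<^sup>*")
      case True
      then have "(w,w') \<in> ET\<^sup>+" using ne by (simp add: rtrancl_eq_or_trancl)
      then have "f w \<noteq> f w'" by (rule below[OF a(1) a(2)])
      then show False using a(3) by (simp only:)
    next
      case F1: False
      show False
      proof (cases "(w',w) \<in> ET\<^sup>*")
        case True
        then have "(w',w) \<in> ET\<^sup>+" using ne by (simp add: rtrancl_eq_or_trancl)
        then have "f w' \<noteq> f w" by (rule below[OF a(2) a(1)])
        then show False using a(3) by (simp only:)
      next
        case False
        have "w' \<in> VT" using a(2) II_sub by blast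
        then have dj: "colset w \<inter> colset w' = {}" by (rule incomp[OF a(1) _ F1 False])
        have "f w \<in> colset w" using f_in[OF a(1)] by (rule conjunct1)
        moreover have "f w' \<in> colset w'" using f_in[OF a(2)] by (rule conjunct1)
        ultimately have "f w \<in> colset w'" using a(3) by (simp only:)
        then show False using \<open>f w \<in> colset w\<close> dj by (simp add: disjoint_iff)
      qed
    qed
  qed
qed

lemma card_II:
  assumes "II \<noteq> {}"
  shows "card II + 2 \<le> card (col ` insert rho X)"
proof -
  define C where "C = col ` insert rho X"
  define D where "D = C - {col rho}"
  define \<mu> where "\<mu> = Min D"
  have "finite {v \<in> VT. outdeg ET v = 0}" using finV by simp
  then have finX: "finite X" using bij_betw_finite[OF bij] by simp
  have finC: "finite C" unfolding C_def using finX by simp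
  have finD: "finite D" unfolding D_def using finC by simp
  have csub: "colset w \<subseteq> D" if "w \<in> II" for w
    using colset_sub no_rho[OF that] unfolding D_def C_def by blast
  obtain w0 where "w0 \<in> II" using assms by blast
  have fi0: "f w0 \<in> colset w0" using f_in[OF \<open>w0 \<in> II\<close>] by (rule conjunct1)
  then have "f w0 \<in> D" using csub[OF \<open>w0 \<in> II\<close>] by blast
  then have muD: "\<mu> \<in> D" unfolding \<mu>_def using finD Min_in by blast
  have "f ` II \<subseteq> D - {\<mu>}"
  proof
    fix y assume "y \<in> f ` II"
    then obtain w where w: "w \<in> II" "y = f w" by blast
    have wV: "w \<in> VT" using w II_sub by auto
    have "\<mu> \<le> Min (colset w)" unfolding \<mu>_def
      using Min_antimono[OF csub[OF w(1)] colset_ne[OF wV] finD] .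
    moreover have fi: "f w \<in> colset w" "Min (colset w) < f w" using f_in[OF w(1)] by simp_all
    ultimately have "f w \<noteq> \<mu>" by linarith
    moreover have "f w \<in> D" using fi(1) csub[OF w(1)] by blast
    ultimately show "y \<in> D - {\<mu>}" using w(2) by simp
  qed
  then have "card (f ` II) \<le> card (D - {\<mu>})" using finD by (simp add: card_mono)
  moreover have "card (f ` II) = card II" using f_inj by (simp add: card_image)
  moreover have "card (D - {\<mu>}) = card D - 1" using muD finD by simp
  moreover have "card D = card C - 1"
  proof -
    have "col rho \<in> C" unfolding C_def by simp
    then show ?thesis unfolding D_def by (rule card_Diff_singleton)
  qed
  moreover have "card D > 0" using muD finD card_gt_0_iff by blast
  ultimately show ?thesis unfolding C_def by linarith
qed

end

lemma conn_sym: "(a,b) \<in> (G \<union> G\<inverse>)\<^sup>* \<Longrightarrow> (b,a) \<in> (G \<union> G\<inverse>)\<^sup>*"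
proof (induction rule: rtrancl_induct)
  case base then show ?case by simp
next
  case (step y z)
  then have "(z,y) \<in> G \<union> G\<inverse>" by auto
  then show ?case using step by (meson converse_rtrancl_into_rtrancl)
qed

lemma net_top:
  assumes "cnet X TT V E lab emb" "v \<in> V"
  shows "\<exists>t \<in> insert None (Some ` {v\<in>V. 2 \<le> indeg E v}). aaf_conn V E (Some v) t"
proof -
  have finV: "finite V" and sub: "E \<subseteq> V \<times> V" and acyc: "acyclic E"
    using assms(1) unfolding cnet_def by auto
  have finE: "finite E" using finV sub by (meson finite_SigmaI finite_subset)
  have wf: "wf E" by (rule finite_acyclic_wf[OF finE acyc])
  show ?thesis using assms(2)
  proof (induction v rule: wf_induct_rule[OF wf])
    case (1 v)
    have finp: "finite {u. (u,v) \<in> E}"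
    proof -
      have "{u. (u,v) \<in> E} \<subseteq> fst ` E" by force
      then show ?thesis using finE finite_subset by blast
    qed
    consider "indeg E v = 0" | "indeg E v = 1" | "2 \<le> indeg E v" by linarith
    then show ?case
    proof cases
      case 1
      then have "(None, Some v) \<in> aaf_graph V E" using \<open>v \<in> V\<close> unfolding aaf_graph_def by blast
      then have "aaf_conn V E (Some v) None" unfolding aaf_conn_def by blast
      then show ?thesis by blast
    next
      case 2
      then obtain u where "{u. (u,v) \<in> E} = {u}" unfolding indeg_def by (metis card_1_singletonE)
      then have u: "(u,v) \<in> E" by blast
      then have "u \<in> V" using sub by auto
      then obtain t where t: "t \<in> insert None (Some ` {v\<in>V. 2 \<le> indeg E v})" "aaf_conn V E (Some u) t"
        using 1 u by blast
      have "(Some u, Some v) \<in> aaf_graph V E" using u 2 unfolding aaf_graph_def by auto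
      then have "aaf_conn V E (Some v) (Some u)" unfolding aaf_conn_def by blast
      then have "aaf_conn V E (Some v) t" using t(2) unfolding aaf_conn_def by (meson rtrancl_trans)
      then show ?thesis using t(1) by blast
    next
      case 3
      then show ?thesis using \<open>v \<in> V\<close> unfolding aaf_conn_def by blast
    qed
  qed
qed

theorem lemma4:
  fixes X :: "'x set" and rho :: 'x and TT :: "('n, 'x) xtree set"
    and V :: "'v set" and E :: "('v \<times> 'v) set" and lab :: "'v \<Rightarrow> 'x"
    and emb :: "('n, 'x) xtree \<Rightarrow> 'v set \<times> ('v \<times> 'v) set"
    and k :: nat and F :: "'x set set"
  assumes "finite X" and "rho \<notin> X"
    and "\<forall>T\<in>TT. rbp_tree X T"
    and "cnet X TT V E lab emb"
    and "k = hyb_number V E"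
    and "F = deletion_aaf X rho V E lab"
  shows "(\<forall>T\<in>TT. card (I_set rho F T) \<le> k - 1) \<and>
         (card TT = 3 \<longrightarrow> card (\<Union>T\<in>TT. I_set rho F T) \<le> 3 * (k - 1))"
proof -
  have finV: "finite V" and bij: "bij_betw lab {v \<in> V. outdeg E v = 0} X"
    using assms(4) unfolding cnet_def by auto
  define R where "R = {v\<in>V. 2 \<le> indeg E v}"
  define Top where "Top = insert None (Some ` R)"
  define ln where "ln x = label_node rho V E lab x" for x
  have finR: "finite R" unfolding R_def using finV by simp
  have finTop: "finite Top" unfolding Top_def using finR by simp
  have ln_ok: "\<exists>t\<in>Top. aaf_conn V E (ln x) t" if "x \<in> insert rho X" for x
  proof (cases "x = rho")
    case True
    then show ?thesis unfolding ln_def label_node_def Top_def aaf_conn_def by auto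
  next
    case False
    then have "x \<in> X" using that by simp
    then have "x \<in> lab ` {v \<in> V. outdeg E v = 0}" using bij_betw_imp_surj_on[OF bij] by simp
    then obtain v where v0: "v \<in> {v \<in> V. outdeg E v = 0}" "x = lab v" by (rule imageE)
    then have v: "v \<in> V" "outdeg E v = 0" "lab v = x" by simp_all
    have "(THE v. v \<in> V \<and> outdeg E v = 0 \<and> lab v = x) = v"
    proof (rule the_equality)
      show "v \<in> V \<and> outdeg E v = 0 \<and> lab v = x" using v by simp
      fix v' assume "v' \<in> V \<and> outdeg E v' = 0 \<and> lab v' = x"
      then show "v' = v" using v bij_betw_imp_inj_on[OF bij] by (auto simp: inj_on_def)
    qed
    then have "ln x = Some v" unfolding ln_def label_node_def using False by simp
    then show ?thesis using net_top[OF assms(4) v(1)] unfolding Top_def R_def by simp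
  qed
  define top where "top x = (SOME t. t\<in>Top \<and> aaf_conn V E (ln x) t)" for x
  have top_ok: "top x \<in> Top \<and> aaf_conn V E (ln x) (top x)" if "x \<in> insert rho X" for x
    unfolding top_def using someI_ex[OF ln_ok[OF that, unfolded Bex_def]] .
  have same_blk: "\<exists>B\<in>F. x\<in>B \<and> y\<in>B"
    if "x \<in> insert rho X" "y \<in> insert rho X" "top x = top y" for x y
  proof -
    define B where "B = {y \<in> insert rho X. aaf_conn V E (ln x) (ln y)}"
    have "B \<in> F" unfolding assms(6) deletion_aaf_def B_def ln_def using that(1) by blast
    moreover have "x \<in> B" unfolding B_def aaf_conn_def using that by simp
    moreover have "y \<in> B"
    proof -
      have "aaf_conn V E (ln y) (top y)" using top_ok[OF that(2)] by (rule conjunct2)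
      then have c2: "aaf_conn V E (top x) (ln y)" using conn_sym that(3) unfolding aaf_conn_def by metis
      have c1: "aaf_conn V E (ln x) (top x)" using top_ok[OF that(1)] by (rule conjunct2)
      have "aaf_conn V E (ln x) (ln y)" using c1 c2 unfolding aaf_conn_def by (rule rtrancl_trans)
      then show ?thesis using that(2) unfolding B_def by simp
    qed
    ultimately show ?thesis by blast
  qed
  obtain h :: "'v option \<Rightarrow> nat" where h: "bij_betw h Top {0..<card Top}"
    using ex_bij_betw_finite_nat[OF finTop] by blast
  have hinj: "inj_on h Top" using h bij_betw_imp_inj_on by blast
  define col where "col x = h (top x)" for x
  have same_col: "\<exists>B\<in>F. x\<in>B \<and> y\<in>B"
    if "x \<in> insert rho X" "y \<in> insert rho X" "col x = col y" for x y
  proof -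
    have "top x \<in> Top" "top y \<in> Top" using top_ok that(1,2) by simp_all
    then have "top x = top y" using inj_onD[OF hinj] that(3) unfolding col_def by blast
    then show ?thesis by (rule same_blk[OF that(1,2)])
  qed
  have c1: "card (col ` insert rho X) \<le> card Top"
  proof -
    have "col ` insert rho X \<subseteq> h ` Top" unfolding col_def using top_ok by blast
    then have "card (col ` insert rho X) \<le> card (h ` Top)" using finTop by (simp add: card_mono)
    also have "\<dots> \<le> card Top" by (rule card_image_le[OF finTop])
    finally show ?thesis .
  qed
  have c2: "card Top \<le> Suc (card R)"
  proof -
    have "card Top \<le> Suc (card (Some ` R))" unfolding Top_def using finR by (simp add: card_insert_if)
    then show ?thesis by (simp add: card_image)
  qed
  have c3: "card R \<le> k"
  proof -
    have "card R = (\<Sum>v\<in>R. 1)" by simp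
    also have "\<dots> \<le> (\<Sum>v\<in>R. indeg E v - 1)" by (rule sum_mono) (auto simp: R_def)
    finally show ?thesis unfolding assms(5) hyb_number_def R_def .
  qed
  have part1: "\<forall>T\<in>TT. card (I_set rho F T) \<le> k - 1"
  proof
    fix T assume "T \<in> TT"
    obtain VT ET lT where T: "T = (VT, ET, lT)" by (cases T) auto
    have rb: "rbp_tree X (VT, ET, lT)" using assms(3) \<open>T \<in> TT\<close> T by simp
    interpret rtree_col X VT ET lT rho F col
      by (unfold_locales) (fact rb, fact same_col)
    show "card (I_set rho F T) \<le> k - 1"
    proof (cases "II = {}")
      case True then show ?thesis unfolding II_def T by simp
    next
      case False
      then have "card II + 2 \<le> card (col ` insert rho X)" by (rule card_II)
      then show ?thesis using c1 c2 c3 unfolding II_def T by linarith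
    qed
  qed
  moreover have "card (\<Union>T\<in>TT. I_set rho F T) \<le> 3 * (k - 1)" if "card TT = 3"
  proof -
    have "finite TT" using that by (intro card_ge_0_finite) simp
    then have "card (\<Union>T\<in>TT. I_set rho F T) \<le> (\<Sum>T\<in>TT. card (I_set rho F T))" by (rule card_UN_le)
    also have "\<dots> \<le> (\<Sum>T\<in>TT. k - 1)" using part1 by (intro sum_mono) blast
    also have "\<dots> = 3 * (k - 1)" using that by simp
    finally show ?thesis .
  qed
  ultimately show ?thesis by blast
qed

end
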